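(* Let $m\ge 1$ be an integer, $\Gamma_1,\Gamma_2$ co-prime integers with $1<\Gamma_1<\Gamma_2$, $m_1=m\Gamma_1$, $m_2=m\Gamma_2$, and $\sigma_1=|\Gamma_2|_{\Gamma_1}\ge 2$. Let $N$ be an integer with $0\le N< m_1\left(1+\lfloor m_2/m_1\rfloor\lfloor m_1/|m_2|_{m_1}\rfloor\right)$, with remainders $r_i=|N|_{m_i}$, and let $\tilde r_1,\tilde r_2$ be erroneous remainders whose errors $\Delta r_i=\tilde r_i-r_i$ satisfy $$-\frac{\sigma_1}{2}\le \frac{\Delta r_1-\Delta r_2}{m}<\frac{\sigma_1}{2}.$$ Let $\mathbf q_{21}=(\tilde r_1-\tilde r_2)/m$. Then: (1) if $\mathbf q_{21}\ge \sigma_1/2$, then $r_1>r_2$; (2) if $\mathbf q_{21}<-\sigma_1/2$, then $r_1<r_2$; (3) if $-\sigma_1/2\le \mathbf q_{21}<\sigma_1/2$, then $r_1=r_2$.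
   Context: $|a|_b$ denotes the remainder of the integer $a$ modulo the positive integer $b$ (in $[0,b)$). Erroneous remainders are integers $\tilde r_i$ with $0\le \tilde r_i<m_i$. *)

theory Defs
  imports Main Complex_Main
begin

end

theory Submission
  imports Defs
begin

lemma key:
  fixes a b n :: int
  assumes a1: "1 < a" and ab: "a < b" and s2: "b mod a \<ge> 1" and n0: "0 \<le> n"
    and nb: "n < a * (1 + (b div a) * (a div (b mod a)))"
  shows "n mod a - n mod b = 0 \<or> n mod a - n mod b \<ge> b mod a \<or> n mod a - n mod b \<le> - (b mod a)"
proof -
  define \<sigma> where "\<sigma> = b mod a"
  define k where "k = b div a"
  define t where "t = a div \<sigma>"
  define j where "j = n div b"
  define s where "s = n mod b"
  have bk: "b = k*a + \<sigma>" unfolding k_def \<sigma>_def by simp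
  have at: "a = t*\<sigma> + a mod \<sigma>" unfolding t_def by simp
  have sp: "0 < \<sigma>" "\<sigma> < a" using s2 a1 unfolding \<sigma>_def by auto
  have am: "0 \<le> a mod \<sigma>" "a mod \<sigma> < \<sigma>" using sp by auto
  have k1: "k \<ge> 1" proof - have "0 < b div a" using ab a1 pos_imp_zdiv_pos_iff[of a b] by simp thus ?thesis unfolding k_def by simp qed
  have t1: "t \<ge> 1" proof - have "0 < a div \<sigma>" using sp pos_imp_zdiv_pos_iff[of \<sigma> a] by simp thus ?thesis unfolding t_def by simp qed
  have nj: "n = j*b + s" unfolding j_def s_def by simp
  have s0: "0 \<le> s" "s < b" unfolding s_def using ab a1 by auto
  have j0: "j \<ge> 0" unfolding j_def using n0 ab a1 by (simp add: div_int_pos_iff)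
  have nb': "n < a + a*k*t" using nb unfolding k_def t_def \<sigma>_def by (simp add: algebra_simps)
  have nma: "n mod a = (j*\<sigma> + s) mod a"
  proof -
    have "n = (j*\<sigma> + s) + (j*k)*a" using nj bk by (simp add: algebra_simps)
    thus ?thesis by (metis mod_mult_self1)
  qed
  show ?thesis
  proof (cases "j = 0")
    case True
    hence "s = n" using nj by simp
    hence d: "n mod a - n mod b = n mod a - n" using s_def by simp
    have "n mod a - n = - (n div a) * a" by (simp add: minus_mod_eq_mult_div [symmetric] algebra_simps)
    moreover have "n div a \<ge> 0" using n0 a1 by (simp add: pos_imp_zdiv_nonneg_iff)
    ultimately have "n mod a - n = 0 \<or> n mod a - n \<le> -a"
      by (cases "n div a = 0") (auto, smt (verit) a1 mult_le_cancel_right1)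
    thus ?thesis using d sp unfolding \<sigma>_def by auto
  next
    case False
    hence jp: "j \<ge> 1" using j0 by simp
    have jt: "j \<le> t"
    proof (rule ccontr)
      assume "\<not> j \<le> t"
      hence "t + 1 \<le> j" by simp
      hence "(t+1)*b \<le> j*b" using ab a1 by (intro mult_right_mono) auto
      moreover have "(t+1)*b = t*k*a + k*a + (t*\<sigma> + \<sigma>)" using bk by (simp add: algebra_simps)
      moreover have "k*a \<ge> 0" using k1 a1 by simp
      moreover have "t*\<sigma> + \<sigma> > a" using at am by simp
      ultimately have "j*b > a + a*k*t" by (simp add: algebra_simps)
      thus False using nj s0 nb' by simp
    qed
    define l where "l = (j*\<sigma> + s) div a"
    have dl: "n mod a - n mod b = j*\<sigma> - l*a"
      using nma unfolding l_def s_def[symmetric]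
      by (simp add: minus_div_mult_eq_mod [symmetric] algebra_simps)
    have js: "j*\<sigma> \<ge> \<sigma>" using jp sp by simp
    show ?thesis
    proof (cases "l \<le> 0")
      case True
      hence "l*a \<le> 0" using a1 by (simp add: mult_nonpos_nonneg)
      thus ?thesis using dl js unfolding \<sigma>_def by auto
    next
      case False
      hence la: "l*a \<ge> a" using a1 by simp
      show ?thesis
      proof (cases "j = t")
        case True
        have "j*b = t*k*a + t*\<sigma>" using True bk by (simp add: algebra_simps)
        hence "s < a - t*\<sigma>" using nj nb' by (simp add: algebra_simps)
        hence "j*\<sigma> + s < a" using True by simp
        moreover have "j*\<sigma> + s \<ge> 0" using j0 sp s0 by simp
        ultimately have "l = 0" unfolding l_def by simp
        thus ?thesis using False by simp
      next
        case False
        hence "j + 1 \<le> t" using jt by simp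
        hence "(j+1)*\<sigma> \<le> t*\<sigma>" using sp by (intro mult_right_mono) auto
        hence "j*\<sigma> + \<sigma> \<le> a" using at am by (simp add: algebra_simps)
        thus ?thesis using dl la unfolding \<sigma>_def by auto
      qed
    qed
  qed
qed

theorem lemma2:
  fixes m \<Gamma>1 \<Gamma>2 N rt1 rt2 :: int
  assumes "m \<ge> 1"
    and "coprime \<Gamma>1 \<Gamma>2"
    and "1 < \<Gamma>1" and "\<Gamma>1 < \<Gamma>2"
    and "\<Gamma>2 mod \<Gamma>1 \<ge> 2"
    and "0 \<le> N"
    and "N < (m * \<Gamma>1) * (1 + ((m * \<Gamma>2) div (m * \<Gamma>1)) * ((m * \<Gamma>1) div ((m * \<Gamma>2) mod (m * \<Gamma>1))))"
    and "0 \<le> rt1" and "rt1 < m * \<Gamma>1"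
    and "0 \<le> rt2" and "rt2 < m * \<Gamma>2"
    and "- (real_of_int (\<Gamma>2 mod \<Gamma>1)) / 2 \<le> real_of_int ((rt1 - N mod (m * \<Gamma>1)) - (rt2 - N mod (m * \<Gamma>2))) / real_of_int m"
    and "real_of_int ((rt1 - N mod (m * \<Gamma>1)) - (rt2 - N mod (m * \<Gamma>2))) / real_of_int m < real_of_int (\<Gamma>2 mod \<Gamma>1) / 2"
  shows "(real_of_int (rt1 - rt2) / real_of_int m \<ge> real_of_int (\<Gamma>2 mod \<Gamma>1) / 2 \<longrightarrow> N mod (m * \<Gamma>1) > N mod (m * \<Gamma>2))
       \<and> (real_of_int (rt1 - rt2) / real_of_int m < - real_of_int (\<Gamma>2 mod \<Gamma>1) / 2 \<longrightarrow> N mod (m * \<Gamma>1) < N mod (m * \<Gamma>2))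
       \<and> (- real_of_int (\<Gamma>2 mod \<Gamma>1) / 2 \<le> real_of_int (rt1 - rt2) / real_of_int m \<and> real_of_int (rt1 - rt2) / real_of_int m < real_of_int (\<Gamma>2 mod \<Gamma>1) / 2 \<longrightarrow> N mod (m * \<Gamma>1) = N mod (m * \<Gamma>2))"
  proof -
  let ?a = "\<Gamma>1" and ?b = "\<Gamma>2"
  define \<sigma> where "\<sigma> = \<Gamma>2 mod \<Gamma>1"
  define n where "n = N div m"
  define c where "c = N mod m"
  have m0: "m \<noteq> 0" using assms(1) by simp
  have r1: "N mod (m * \<Gamma>1) = m * (n mod \<Gamma>1) + c"
    unfolding n_def c_def using zmod_zmult2_eq[of \<Gamma>1 N m] assms(3) by simp
  have r2: "N mod (m * \<Gamma>2) = m * (n mod \<Gamma>2) + c"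
    unfolding n_def c_def using zmod_zmult2_eq[of \<Gamma>2 N m] assms(3,4) by simp
  have e1: "(m * \<Gamma>2) div (m * \<Gamma>1) = \<Gamma>2 div \<Gamma>1" using m0 by simp
  have e2: "(m * \<Gamma>2) mod (m * \<Gamma>1) = m * \<sigma>" unfolding \<sigma>_def by (rule mod_mult_mult1)
  have e3: "(m * \<Gamma>1) div (m * \<sigma>) = \<Gamma>1 div \<sigma>" using m0 by simp
  define B where "B = 1 + (\<Gamma>2 div \<Gamma>1) * (\<Gamma>1 div \<sigma>)"
  have NB: "N < m * (\<Gamma>1 * B)" using assms(7) unfolding e1 e2 e3 B_def by (simp add: mult.assoc)
  have n0: "0 \<le> n" unfolding n_def using assms(1,6) by (simp add: pos_imp_zdiv_nonneg_iff)
  have "m * n + c = N" unfolding n_def c_def by simp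
  moreover have "c \<ge> 0" unfolding c_def using assms(1) by simp
  ultimately have "m * n \<le> N" by linarith
  hence "m * n < m * (\<Gamma>1 * B)" using NB by simp
  hence nb: "n < \<Gamma>1 * B" using assms(1) by simp
  have K: "n mod \<Gamma>1 - n mod \<Gamma>2 = 0 \<or> n mod \<Gamma>1 - n mod \<Gamma>2 \<ge> \<sigma> \<or> n mod \<Gamma>1 - n mod \<Gamma>2 \<le> - \<sigma>"
    using key[of \<Gamma>1 \<Gamma>2 n] assms(3,4,5) n0 nb unfolding B_def \<sigma>_def by simp
  define d where "d = n mod \<Gamma>1 - n mod \<Gamma>2"
  have rd: "N mod (m * \<Gamma>1) - N mod (m * \<Gamma>2) = m * d" unfolding r1 r2 d_def by (simp add: algebra_simps)
  define D where "D = (rt1 - N mod (m * \<Gamma>1)) - (rt2 - N mod (m * \<Gamma>2))"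
  have rt: "rt1 - rt2 = m * d + D" using rd unfolding D_def by simp
  have mr: "real_of_int m > 0" using assms(1) by simp
  have q: "real_of_int (rt1 - rt2) / real_of_int m = real_of_int d + real_of_int D / real_of_int m"
    using rt mr by (simp add: field_simps)
  have D1: "- real_of_int \<sigma> / 2 \<le> real_of_int D / real_of_int m" using assms(12) unfolding D_def \<sigma>_def by simp
  have D2: "real_of_int D / real_of_int m < real_of_int \<sigma> / 2" using assms(13) unfolding D_def \<sigma>_def by simp
  have sg: "real_of_int \<sigma> > 0" using assms(5) unfolding \<sigma>_def by simp
  have p1: "0 < m * d \<longleftrightarrow> 0 < d" using assms(1) by (simp add: zero_less_mult_iff)
  have p2: "m * d < 0 \<longleftrightarrow> d < 0" using assms(1) by (simp add: mult_less_0_iff)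
  have pos: "d > 0 \<longleftrightarrow> N mod (m * \<Gamma>1) > N mod (m * \<Gamma>2)" using rd p1 by linarith
  have neg: "d < 0 \<longleftrightarrow> N mod (m * \<Gamma>1) < N mod (m * \<Gamma>2)" using rd p2 by linarith
  have zer: "d = 0 \<longleftrightarrow> N mod (m * \<Gamma>1) = N mod (m * \<Gamma>2)" using rd p1 p2 by linarith
  have K': "d = 0 \<or> real_of_int d \<ge> real_of_int \<sigma> \<or> real_of_int d \<le> - real_of_int \<sigma>"
    using K unfolding d_def by linarith
  show ?thesis unfolding q \<sigma>_def[symmetric]
  proof (intro conjI impI)
    assume h: "real_of_int \<sigma> / 2 \<le> real_of_int d + real_of_int D / real_of_int m"
    have "real_of_int d > 0" using K' h D2 sg by linarith
    thus "N mod (m * \<Gamma>2) < N mod (m * \<Gamma>1)" using pos by simp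
  next
    assume h: "real_of_int d + real_of_int D / real_of_int m < - real_of_int \<sigma> / 2"
    have "real_of_int d < 0" using K' h D1 sg by linarith
    thus "N mod (m * \<Gamma>1) < N mod (m * \<Gamma>2)" using neg by simp
  next
    assume h: "- real_of_int \<sigma> / 2 \<le> real_of_int d + real_of_int D / real_of_int m \<and> real_of_int d + real_of_int D / real_of_int m < real_of_int \<sigma> / 2"
    have "real_of_int d = 0" using K' h D1 D2 sg by linarith
    thus "N mod (m * \<Gamma>1) = N mod (m * \<Gamma>2)" using zer by simp
  qed
qed

end
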